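(* Let $A,B\in\mathbb{Z}$ with $4A^3+27B^2\ne0$, let $M$ be a positive integer with $\max\{10\sqrt{|A|},5\sqrt[3]{|B|}\}\le M$, let $D$ be a squarefree positive integer and $E_D: y^2=x^3+D^2Ax+D^3B$. Let $P,Q$ be points of $E_D$ with integer coordinates satisfying $MD\le x(P)<x(Q)$. Then \[h(P+Q)\le h(P)+2h(Q)+2.9.\]
   Context: $h$ is the absolute logarithmic Weil height on $\overline{\mathbb{Q}}$, and for a point $P$ on $E_D$, $h(P)=h(x(P))$. *)

theory Defs
  imports Complex_Main "HOL-Computational_Algebra.Squarefree"
begin

text \<open>Points of a short Weierstrass curve y^2 = x^3 + a x + b over Q:
  None is the point at infinity, Some (x, y) an affine point.\<close>
type_synonym ec_point = "(rat \<times> rat) option"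

definition on_curve :: "rat \<Rightarrow> rat \<Rightarrow> ec_point \<Rightarrow> bool" where
  "on_curve a b P = (case P of None \<Rightarrow> True
     | Some (x, y) \<Rightarrow> y^2 = x^3 + a * x + b)"

definition ec_add :: "rat \<Rightarrow> rat \<Rightarrow> ec_point \<Rightarrow> ec_point \<Rightarrow> ec_point" where
  "ec_add a b P Q = (case P of None \<Rightarrow> Q | Some (x1, y1) \<Rightarrow>
     (case Q of None \<Rightarrow> P | Some (x2, y2) \<Rightarrow>
       (if x1 = x2 \<and> y1 = - y2 then None
        else (let l = (if x1 = x2 then (3 * x1^2 + a) / (2 * y1)
                       else (y2 - y1) / (x2 - x1));
                  x3 = l^2 - x1 - x2
              in Some (x3, l * (x1 - x3) - y1)))))"

definition rat_height :: "rat \<Rightarrow> real" where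
  "rat_height r = (case quotient_of r of (p, q) \<Rightarrow> ln (real_of_int (max \<bar>p\<bar> \<bar>q\<bar>)))"

definition ec_height :: "ec_point \<Rightarrow> real" where
  "ec_height P = (case P of None \<Rightarrow> 0 | Some (x, y) \<Rightarrow> rat_height x)"

end

theory Submission imports Defs begin

lemma rat_height_le:
  fixes n d :: int
  assumes "d > 0" "r = of_int n / of_int d"
  shows "rat_height r \<le> ln (real_of_int (max \<bar>n\<bar> d))"
proof -
  obtain p q where pq: "quotient_of r = (p, q)" by (cases "quotient_of r") auto
  have q0: "q > 0" using quotient_of_denom_pos[OF pq] .
  have cop: "coprime p q" using quotient_of_coprime[OF pq] .
  have "r = of_int p / of_int q" using quotient_of_div[OF pq] .
  with assms have "(of_int p :: rat) / of_int q = of_int n / of_int d" by simp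
  hence eq: "p * d = n * q" using q0 assms(1)
    by (simp add: field_simps) (metis of_int_eq_iff of_int_mult)
  have "q dvd p * d" using eq by simp
  hence "q dvd d" using cop by (metis coprime_commute coprime_dvd_mult_right_iff)
  hence qd: "q \<le> d" using assms(1) by (simp add: zdvd_imp_le)
  have pn: "\<bar>p\<bar> \<le> \<bar>n\<bar>"
  proof (cases "n = 0")
    case True then show ?thesis using eq q0 assms(1) by simp
  next
    case False
    have "p dvd n * q" using eq by (metis dvd_triv_left)
    hence "p dvd n" using cop by (simp add: coprime_dvd_mult_left_iff)
    then show ?thesis using False by (simp add: dvd_imp_le_int)
  qed
  have "rat_height r = ln (real_of_int (max \<bar>p\<bar> q))" using q0 by (simp add: rat_height_def pq)
  also have "\<dots> \<le> ln (real_of_int (max \<bar>n\<bar> d))"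
    using qd pn q0 by (subst ln_le_cancel_iff) auto
  finally show ?thesis .
qed

lemma rat_height_int: "x > 0 \<Longrightarrow> rat_height (of_int x) = ln (real_of_int x)"
  by (simp add: rat_height_def)

lemma exp_29: "(5::real) \<le> exp 2.9"
proof -
  have "(2.45::real) \<le> exp 1.45" using exp_ge_add_one_self[of "1.45::real"] by simp
  hence "(2.45::real)^2 \<le> (exp 1.45)^2" by (rule power_mono) simp
  also have "(exp (1.45::real))^2 = exp 2.9" by (simp add: power2_eq_square exp_add[symmetric])
  finally show ?thesis by (simp add: power2_eq_square)
qed

lemma gen_div: "(u::rat) \<noteq> 0 \<Longrightarrow> (v / u)^2 - s = (v^2 - s * u^2) / u^2"
  by (simp add: power_divide diff_divide_distrib)

theorem lemma3p9:
  fixes A B M D xP yP xQ yQ :: int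
  assumes "4 * A^3 + 27 * B^2 \<noteq> 0"
    and "M > 0"
    and "max (10 * sqrt \<bar>real_of_int A\<bar>) (5 * root 3 \<bar>real_of_int B\<bar>) \<le> real_of_int M"
    and "D > 0" and "squarefree D"
    and "on_curve (of_int (D^2 * A)) (of_int (D^3 * B)) (Some (of_int xP, of_int yP))"
    and "on_curve (of_int (D^2 * A)) (of_int (D^3 * B)) (Some (of_int xQ, of_int yQ))"
    and "M * D \<le> xP" and "xP < xQ"
  shows "ec_height (ec_add (of_int (D^2 * A)) (of_int (D^3 * B))
            (Some (of_int xP, of_int yP)) (Some (of_int xQ, of_int yQ)))
         \<le> ec_height (Some (of_int xP, of_int yP)) + 2 * ec_height (Some (of_int xQ, of_int yQ)) + 2.9"
proof -
  define a where "a = D^2 * A"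
  define b where "b = D^3 * B"
  have MD: "M * D > 0" using assms by simp
  have xP0: "xP > 0" using MD assms by linarith
  have xQ0: "xQ > 0" using xP0 assms by linarith
  have eP: "yP^2 = xP^3 + a * xP + b"
  proof -
    have "(of_int yP :: rat)^2 = of_int xP^3 + of_int a * of_int xP + of_int b"
      using assms(6) by (simp add: on_curve_def a_def b_def)
    thus ?thesis by (metis of_int_eq_iff of_int_add of_int_mult of_int_power)
  qed
  have eQ: "yQ^2 = xQ^3 + a * xQ + b"
  proof -
    have "(of_int yQ :: rat)^2 = of_int xQ^3 + of_int a * of_int xQ + of_int b"
      using assms(7) by (simp add: on_curve_def a_def b_def)
    thus ?thesis by (metis of_int_eq_iff of_int_add of_int_mult of_int_power)
  qed
  have hA: "100 * \<bar>A\<bar> \<le> M^2"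
  proof -
    have "10 * sqrt \<bar>real_of_int A\<bar> \<le> real_of_int M" using assms(3) by simp
    hence "(10 * sqrt \<bar>real_of_int A\<bar>)^2 \<le> (real_of_int M)^2"
      by (rule power_mono) simp
    hence "real_of_int (100 * \<bar>A\<bar>) \<le> real_of_int (M^2)" by (simp add: power_mult_distrib)
    thus ?thesis by linarith
  qed
  have hB: "125 * \<bar>B\<bar> \<le> M^3"
  proof -
    have "5 * root 3 \<bar>real_of_int B\<bar> \<le> real_of_int M" using assms(3) by simp
    hence "(5 * root 3 \<bar>real_of_int B\<bar>)^3 \<le> (real_of_int M)^3"
      by (rule power_mono) simp
    hence "real_of_int (125 * \<bar>B\<bar>) \<le> real_of_int (M^3)" by (simp add: power_mult_distrib)
    thus ?thesis by linarith
  qed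
  have ha: "100 * \<bar>a\<bar> \<le> xP^2"
  proof -
    have "100 * \<bar>a\<bar> = D^2 * (100 * \<bar>A\<bar>)" by (simp add: a_def abs_mult)
    also have "\<dots> \<le> D^2 * M^2" using hA by (simp add: mult_left_mono)
    also have "\<dots> = (M*D)^2" by (simp add: power_mult_distrib)
    also have "\<dots> \<le> xP^2" using MD assms(8) by (simp add: power_mono)
    finally show ?thesis .
  qed
  have hb: "125 * \<bar>b\<bar> \<le> xP^3"
  proof -
    have "125 * \<bar>b\<bar> = D^3 * (125 * \<bar>B\<bar>)" using assms(4) by (simp add: b_def abs_mult)
    also have "\<dots> \<le> D^3 * M^3" using hB assms(4) by (simp add: mult_left_mono)
    also have "\<dots> = (M*D)^3" by (simp add: power_mult_distrib)
    also have "\<dots> \<le> xP^3" using MD assms(8) by (simp add: power_mono)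
    finally show ?thesis .
  qed
  have PQ: "xP \<le> xQ" using assms by simp
  have xx2: "xP^2 \<le> xQ^2" using PQ xP0 by (simp add: power_mono)
  have xx3: "xP^3 \<le> xQ^3" using PQ xP0 by (simp add: power_mono)
  have yP2: "1000 * yP^2 \<le> 1018 * xP^3"
  proof -
    have "\<bar>a * xP\<bar> * 100 \<le> xP^3" using ha xP0
      by (simp add: abs_mult power3_eq_cube power2_eq_square mult_right_mono)
    moreover have "a * xP \<le> \<bar>a * xP\<bar>" "b \<le> \<bar>b\<bar>" by simp_all
    ultimately show ?thesis using eP hb by linarith
  qed
  have yQ2: "1000 * yQ^2 \<le> 1018 * xQ^3"
  proof -
    have "\<bar>a * xQ\<bar> * 100 \<le> xQ^3" using ha xx2 xQ0
      by (simp add: abs_mult power3_eq_cube power2_eq_square)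
    moreover have "a * xQ \<le> \<bar>a * xQ\<bar>" "b \<le> \<bar>b\<bar>" by simp_all
    ultimately show ?thesis using eQ hb xx3 by linarith
  qed
  have yy: "1000 * \<bar>yP * yQ\<bar> \<le> 1018 * (xP * xQ^2)"
  proof -
    have "(1000 * (yP * yQ))^2 = (1000 * yP^2) * (1000 * yQ^2)" by algebra
    also have "\<dots> \<le> (1018 * xP^3) * (1018 * xQ^3)"
      by (rule mult_mono[OF yP2 yQ2]) (use xP0 in simp_all)
    also have "\<dots> = 1018^2 * (xP^2 * xQ^2) * (xP * xQ)" by algebra
    also have "\<dots> \<le> 1018^2 * (xP^2 * xQ^2) * (xQ * xQ)"
      using PQ xQ0 xP0 by (intro mult_left_mono) auto
    also have "\<dots> = (1018 * (xP * xQ^2))^2" by algebra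
    finally have "(1000 * (yP * yQ))^2 \<le> (1018 * (xP * xQ^2))^2" .
    hence "\<bar>1000 * (yP * yQ)\<bar> \<le> \<bar>1018 * (xP * xQ^2)\<bar>" using abs_le_square_iff by blast
    thus ?thesis using xP0 xQ0 by (simp add: abs_mult)
  qed
  define N where "N = (yQ - yP)^2 - (xP + xQ) * (xQ - xP)^2"
  define d where "d = (xQ - xP)^2"
  have d0: "d > 0" using assms(9) by (simp add: d_def)
  have Neq: "N = xP * xQ * (xP + xQ) + a * (xP + xQ) + 2 * b - 2 * (yP * yQ)"
    using eP eQ unfolding N_def by algebra
  have add: "ec_add (of_int (D^2 * A)) (of_int (D^3 * B))
            (Some (of_int xP, of_int yP)) (Some (of_int xQ, of_int yQ))
     = Some (of_int N / of_int d, snd (the (ec_add (of_int (D^2 * A)) (of_int (D^3 * B))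
            (Some (of_int xP, of_int yP)) (Some (of_int xQ, of_int yQ)))))"
  proof -
    have ne: "(of_int xQ :: rat) - of_int xP \<noteq> 0" using assms(9) by simp
    have "((of_int yQ - of_int yP) / (of_int xQ - of_int xP))^2 - of_int xP - of_int xQ
          = (of_int N / of_int d :: rat)"
    proof -
      have gen: "\<And>u v s :: rat. u \<noteq> 0 \<Longrightarrow> (v / u)^2 - s = (v^2 - s * u^2) / u^2"
        by (simp add: power_divide diff_divide_distrib)
      have "of_int N = (of_int yQ - of_int yP)^2 - (of_int xP + of_int xQ) * (of_int xQ - of_int xP :: rat)^2"
        by (simp add: N_def)
      moreover have "of_int d = (of_int xQ - of_int xP :: rat)^2" by (simp add: d_def)
      ultimately show ?thesis using gen[OF ne, of "of_int yQ - of_int yP" "of_int xP + of_int xQ"]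
        by (simp add: algebra_simps)
    qed
    then show ?thesis using assms(9) by (simp add: ec_add_def Let_def)
  qed
  have t1: "xP * xQ * (xP + xQ) \<le> 2 * (xP * xQ^2)"
  proof -
    have "xP * xQ * (xP + xQ) \<le> xP * xQ * (2 * xQ)" using PQ xP0 xQ0 by (intro mult_left_mono) auto
    thus ?thesis by (simp add: power2_eq_square algebra_simps)
  qed
  have t1': "0 \<le> xP * xQ * (xP + xQ)" using xP0 xQ0 by simp
  have t2: "100 * \<bar>a * (xP + xQ)\<bar> \<le> 2 * (xP * xQ^2)"
  proof -
    have "100 * \<bar>a * (xP + xQ)\<bar> = (100 * \<bar>a\<bar>) * (xP + xQ)" using xP0 xQ0 by (simp add: abs_mult)
    also have "\<dots> \<le> (xP * xQ) * (2 * xQ)"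
    proof (rule mult_mono)
      have "xP^2 \<le> xP * xQ" using PQ xP0 by (simp add: power2_eq_square)
      thus "100 * \<bar>a\<bar> \<le> xP * xQ" using ha by linarith
    qed (use PQ xP0 xQ0 in auto)
    finally show ?thesis by (simp add: power2_eq_square algebra_simps)
  qed
  have t3: "125 * \<bar>b\<bar> \<le> xP * xQ^2"
  proof -
    have "xP^3 = xP * xP^2" by (simp add: power3_eq_cube power2_eq_square)
    also have "\<dots> \<le> xP * xQ^2" using xx2 xP0 by simp
    finally show ?thesis using hb by linarith
  qed
  have Nb: "1000 * \<bar>N\<bar> \<le> 5000 * (xP * xQ^2)"
  proof -
    have "\<bar>N\<bar> \<le> \<bar>xP * xQ * (xP + xQ)\<bar> + \<bar>a * (xP + xQ)\<bar> + 2 * \<bar>b\<bar> + 2 * \<bar>yP * yQ\<bar>"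
      unfolding Neq by linarith
    thus ?thesis using t1 t1' t2 t3 yy by linarith
  qed
  have db: "d \<le> xP * xQ^2"
  proof -
    have "d \<le> xQ^2" unfolding d_def using xP0 assms(9) by (intro power_mono) auto
    also have "\<dots> \<le> xP * xQ^2" using mult_right_mono[of 1 xP "xQ^2"] xP0 by simp
    finally show ?thesis .
  qed
  have mx: "max \<bar>N\<bar> d \<le> 5 * (xP * xQ^2)" using Nb db xP0 xQ0 by simp
  have "ec_height (ec_add (of_int (D^2 * A)) (of_int (D^3 * B))
            (Some (of_int xP, of_int yP)) (Some (of_int xQ, of_int yQ)))
        = rat_height (of_int N / of_int d)" by (subst add) (simp add: ec_height_def)
  also have "\<dots> \<le> ln (real_of_int (max \<bar>N\<bar> d))" by (rule rat_height_le[OF d0 refl])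
  also have "\<dots> \<le> ln (5 * (real_of_int xP * real_of_int xQ ^ 2))"
  proof (subst ln_le_cancel_iff)
    show "0 < real_of_int (max \<bar>N\<bar> d)" using d0 by simp
    show "0 < 5 * (real_of_int xP * real_of_int xQ ^ 2)" using xP0 xQ0 by simp
    have "real_of_int (max \<bar>N\<bar> d) \<le> real_of_int (5 * (xP * xQ^2))" using mx by linarith
    thus "real_of_int (max \<bar>N\<bar> d) \<le> 5 * (real_of_int xP * real_of_int xQ ^ 2)" by simp
  qed
  also have "\<dots> = ln 5 + ln (real_of_int xP) + 2 * ln (real_of_int xQ)"
    using xP0 xQ0 by (simp add: ln_mult ln_realpow)
  also have "\<dots> \<le> ln (real_of_int xP) + 2 * ln (real_of_int xQ) + 2.9"
  proof -
    have "ln 5 \<le> ln (exp (2.9::real))" using exp_29 by (subst ln_le_cancel_iff) auto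
    thus ?thesis by simp
  qed
  also have "\<dots> = ec_height (Some (of_int xP, of_int yP)) + 2 * ec_height (Some (of_int xQ, of_int yQ)) + 2.9"
    using xP0 xQ0 by (simp add: ec_height_def rat_height_int)
  finally show ?thesis .
qed

end
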